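(* Let $L$ be an atomic orthomodular lattice and let $V\in\mathcal{B}(L)$ be a $2$-dimensional BSA with $\mathcal{F}_V=\{P,P^{\perp}\}$ which is not spiked and such that each of $P$ and $P^{\perp}$ is the join of three or more pairwise orthogonal atoms of $L$. Let $A,B\in\mathcal{M}_V$. Then $A$ and $B$ have the same leading element if and only if there exist a $2$-dimensional, non-spiked $W\in\mathcal{B}(L)$ with $W\neq V$ and $C,D\in\mathcal{M}_W$ such that $A\subseteq C$ and $B\subseteq D$.
   Context: $L$ is an orthomodular lattice with $0$, $1$ and orthocomplementation $P\mapsto P^{\perp}$, which is atomic (every nonzero element lies above an atom, i.e. a minimal nonzero element). Elements $P,Q$ are orthogonal if $P\le Q^{\perp}$. A Boolean subalgebra (BSA) $V$ of $L$ is generated by a family $\mathcal{F}$ of nonzero pairwise orthogonal elements of $L$ with join $1$ if the elements of $\mathcal{F}$ are the atoms of $V$ and every element of $V$ is a join of elements of $\mathcal{F}$; this family is denoted $\mathcal{F}_V$. $\mathcal{B}(L)$ is the set of BSAs of $L$ generated by some such family, ordered by inclusion; the dimension of $V$ is the cardinality of $\mathcal{F}_V$. An mBSA is an element of $\mathcal{B}(L)$ generated by a family of pairwise orthogonal atoms of $L$ with join $1$. $V\in\mathcal{B}(L)$ is spiked if it is an mBSA or its generating family contains precisely one element that is not an atom of $L$ (all others being atoms); in the latter case this unique non-atom is called the leading element of $V$. For a $2$-dimensional non-spiked $V\in\mathcal{B}(L)$, $\mathcal{S}_V$ denotes the set of spiked elements of $\mathcal{B}(L)$ containing $V$, and $\mathcal{M}_V$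 the set of minimal elements of $\mathcal{S}_V$ with respect to inclusion. *)

theory Defs
  imports "HOL-Library.Complemented_Lattices"
begin

(* L is modelled as a type of class orthomodular_lattice; 0 = bot, 1 = top,
   orthocomplement P^perp = - P. *)

definition orthogonal :: "'a::orthomodular_lattice \<Rightarrow> 'a \<Rightarrow> bool" where
  "orthogonal P Q \<longleftrightarrow> P \<le> - Q"

definition is_atom :: "'a::orthomodular_lattice \<Rightarrow> bool" where
  "is_atom a \<longleftrightarrow> a \<noteq> bot \<and> (\<forall>x. x \<le> a \<longrightarrow> x = bot \<or> x = a)"

definition atomic_oml :: "'a::orthomodular_lattice itself \<Rightarrow> bool" where
  "atomic_oml _ \<longleftrightarrow> (\<forall>x::'a. x \<noteq> bot \<longrightarrow> (\<exists>a. is_atom a \<and> a \<le> x))"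

definition is_join :: "'a::orthomodular_lattice set \<Rightarrow> 'a \<Rightarrow> bool" where
  "is_join S x \<longleftrightarrow> (\<forall>s\<in>S. s \<le> x) \<and> (\<forall>y. (\<forall>s\<in>S. s \<le> y) \<longrightarrow> x \<le> y)"

definition pairwise_orth :: "'a::orthomodular_lattice set \<Rightarrow> bool" where
  "pairwise_orth F \<longleftrightarrow> (\<forall>x\<in>F. \<forall>y\<in>F. x \<noteq> y \<longrightarrow> orthogonal x y)"

definition is_BSA :: "'a::orthomodular_lattice set \<Rightarrow> bool" where
  "is_BSA V \<longleftrightarrow> bot \<in> V \<and> top \<in> V \<and>
     (\<forall>x\<in>V. \<forall>y\<in>V. sup x y \<in> V \<and> inf x y \<in> V) \<and> (\<forall>x\<in>V. - x \<in> V) \<and>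
     (\<forall>x\<in>V. \<forall>y\<in>V. \<forall>z\<in>V. inf x (sup y z) = sup (inf x y) (inf x z))"

definition atoms_of :: "'a::orthomodular_lattice set \<Rightarrow> 'a set" where
  "atoms_of V = {a \<in> V. a \<noteq> bot \<and> (\<forall>x\<in>V. x \<le> a \<longrightarrow> x = bot \<or> x = a)}"

definition generated_by :: "'a::orthomodular_lattice set \<Rightarrow> 'a set \<Rightarrow> bool" where
  "generated_by V F \<longleftrightarrow> is_BSA V \<and> (\<forall>x\<in>F. x \<noteq> bot) \<and> pairwise_orth F \<and> is_join F top \<and>
     F = atoms_of V \<and> (\<forall>v\<in>V. \<exists>S\<subseteq>F. is_join S v)"

definition inB :: "'a::orthomodular_lattice set \<Rightarrow> bool" where
  "inB V \<longleftrightarrow> (\<exists>F. generated_by V F)"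

(* generating family F_V (unique when it exists: the atoms of V) *)
definition FV :: "'a::orthomodular_lattice set \<Rightarrow> 'a set" where
  "FV V = atoms_of V"

definition dim2 :: "'a::orthomodular_lattice set \<Rightarrow> bool" where
  "dim2 V \<longleftrightarrow> finite (FV V) \<and> card (FV V) = 2"

definition is_mBSA :: "'a::orthomodular_lattice set \<Rightarrow> bool" where
  "is_mBSA V \<longleftrightarrow> inB V \<and> (\<forall>x\<in>FV V. is_atom x)"

definition leading :: "'a::orthomodular_lattice set \<Rightarrow> 'a \<Rightarrow> bool" where
  "leading V x \<longleftrightarrow> inB V \<and> x \<in> FV V \<and> \<not> is_atom x \<and> (\<forall>y\<in>FV V. y \<noteq> x \<longrightarrow> is_atom y)"

definition spiked :: "'a::orthomodular_lattice set \<Rightarrow> bool" where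
  "spiked V \<longleftrightarrow> is_mBSA V \<or> (\<exists>x. leading V x)"

definition S_of :: "'a::orthomodular_lattice set \<Rightarrow> 'a set set" where
  "S_of V = {W. inB W \<and> spiked W \<and> V \<subseteq> W}"

definition M_of :: "'a::orthomodular_lattice set \<Rightarrow> 'a set set" where
  "M_of V = {W \<in> S_of V. \<forall>W'\<in>S_of V. W' \<subseteq> W \<longrightarrow> W' = W}"

end

theory Submission
  imports Defs
begin

section \<open>Orthomodular lattice facts\<close>

lemma om1: "(x::'a::orthomodular_lattice) \<le> y \<Longrightarrow> sup x (inf (-x) y) = y"
  by (rule orthomodular)

lemma om2: assumes "(u::'a::orthomodular_lattice) \<le> v" shows "inf v (sup u (-v)) = u"
proof -
  have "-v \<le> -u" using assms by simp
  then have "sup (-v) (inf (- (-v)) (-u)) = -u" by (rule om1)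
  then have "- sup (-v) (inf (- (-v)) (-u)) = u" by simp
  then show ?thesis by (simp add: sup_commute)
qed

lemma J2M:
  fixes P y z :: "'a::orthomodular_lattice"
  assumes "y \<le> P" "z \<le> -P"
  shows "inf (sup P z) (sup (-P) y) = sup y z"
proof -
  let ?g = "inf (sup P z) (sup (-P) y)"
  let ?a = "sup y z"
  have a: "?a \<le> ?g" using assms
    by (meson inf.bounded_iff le_supI le_supI1 le_supI2 order_refl)
  have z1: "inf (-z) (sup P z) = P"
  proof -
    have "P \<le> -z" using assms(2) compl_le_swap1 by blast
    then show ?thesis using om2[of P "-z"] by simp
  qed
  have y1: "inf (-y) (sup (-P) y) = -P"
  proof -
    have "-P \<le> -y" using assms(1) by simp
    then show ?thesis using om2[of "-P" "-y"] by simp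
  qed
  have "inf (-?a) ?g = inf (inf (-z) (sup P z)) (inf (-y) (sup (-P) y))"
    by (simp add: inf_aci)
  also have "\<dots> = bot" using z1 y1 by simp
  finally have b: "inf (-?a) ?g = bot" .
  have "sup ?a (inf (-?a) ?g) = ?g" using om1[OF a] .
  then show ?thesis using b by simp
qed

lemma PROJ:
  fixes P y z :: "'a::orthomodular_lattice"
  assumes "y \<le> P" "z \<le> -P"
  shows "inf (sup y z) P = y"
proof -
  have "inf (sup y z) P = inf (inf (sup P z) (sup (-P) y)) P" using J2M[OF assms] by simp
  also have "\<dots> = inf P (sup (-P) y)"
    by (metis inf.absorb_iff2 inf_commute inf_left_commute sup.cobounded1)
  also have "\<dots> = y" using om2[OF assms(1)] by (simp add: sup_commute)
  finally show ?thesis .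
qed

lemma PROJ2:
  fixes P y z :: "'a::orthomodular_lattice"
  assumes "y \<le> P" "z \<le> -P"
  shows "inf (sup y z) (-P) = z"
proof -
  have "y \<le> - (-P)" using assms by simp
  then have "inf (sup z y) (-P) = z" using PROJ[of z "-P" y] assms by simp
  then show ?thesis by (simp add: sup_commute)
qed

lemma JF:
  fixes P x :: "'a::orthomodular_lattice"
  assumes "x = inf (sup x P) (sup x (-P))"
  shows "x = sup (inf x P) (inf x (-P))"
proof -
  let ?y = "inf (-x) P" and ?z = "inf (-x) (-P)"
  have "-x = - inf (sup x P) (sup x (-P))" using assms by simp
  also have "\<dots> = sup ?z ?y" by (simp add: sup_commute inf_commute)
  also have "\<dots> = sup ?y ?z" by (simp add: sup_commute)
  also have "\<dots> = inf (sup P ?z) (sup (-P) ?y)" using J2M[of ?y P ?z] by simp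
  finally have "-x = inf (sup P ?z) (sup (-P) ?y)" .
  then have x: "x = sup (inf (-P) (- ?z)) (inf P (- ?y))"
    by (metis compl_inf compl_sup ortho_involution)
  let ?y2 = "inf P (- ?y)" and ?z2 = "inf (-P) (- ?z)"
  have x2: "x = sup ?y2 ?z2" using x by (simp add: sup_commute)
  have "inf x P = ?y2" using PROJ[of ?y2 P ?z2] x2 by simp
  moreover have "inf x (-P) = ?z2" using PROJ2[of ?y2 P ?z2] x2 by simp
  ultimately show ?thesis using x2 by simp
qed

lemma INF:
  fixes P y1 y2 z1 z2 :: "'a::orthomodular_lattice"
  assumes "y1 \<le> P" "z1 \<le> -P" "y2 \<le> P" "z2 \<le> -P"
  shows "inf (sup y1 z1) (sup y2 z2) = sup (inf y1 y2) (inf z1 z2)"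
proof -
  let ?a = "sup y1 z1" and ?b = "sup y2 z2"
  let ?m = "inf ?a ?b"
  have aP: "sup ?a P = sup P z1" using assms by (intro antisym) (simp_all add: le_supI1 le_supI2)
  have aP': "sup ?a (-P) = sup (-P) y1" using assms by (intro antisym) (simp_all add: le_supI1 le_supI2)
  have bP: "sup ?b P = sup P z2" using assms by (intro antisym) (simp_all add: le_supI1 le_supI2)
  have bP': "sup ?b (-P) = sup (-P) y2" using assms by (intro antisym) (simp_all add: le_supI1 le_supI2)
  have a: "?a = inf (sup ?a P) (sup ?a (-P))" using J2M[of y1 P z1] assms aP aP' by simp
  have b: "?b = inf (sup ?b P) (sup ?b (-P))" using J2M[of y2 P z2] assms bP bP' by simp
  have "inf (sup ?m P) (sup ?m (-P)) \<le> inf (inf (sup ?a P) (sup ?a (-P))) (inf (sup ?b P) (sup ?b (-P)))"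
    by (meson inf.bounded_iff inf.cobounded1 inf.cobounded2 le_infI1 le_infI2 sup_mono order_refl)
  also have "\<dots> = ?m" using a b by simp
  finally have "?m = inf (sup ?m P) (sup ?m (-P))"
    by (meson antisym inf.bounded_iff sup.cobounded1)
  then have m: "?m = sup (inf ?m P) (inf ?m (-P))" by (rule JF)
  have "inf ?m P = inf (inf ?a P) (inf ?b P)" by (simp add: inf_aci)
  also have "\<dots> = inf y1 y2" using PROJ assms by metis
  finally have 1: "inf ?m P = inf y1 y2" .
  have "inf ?m (-P) = inf (inf ?a (-P)) (inf ?b (-P))" by (simp add: inf_aci)
  also have "\<dots> = inf z1 z2" using PROJ2 assms by metis
  finally have 2: "inf ?m (-P) = inf z1 z2" .
  show ?thesis using m 1 2 by simp
qed

lemma join_le: "is_join S x \<Longrightarrow> s \<in> S \<Longrightarrow> s \<le> x"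
  unfolding is_join_def by blast

lemma join_least: "is_join S x \<Longrightarrow> (\<And>s. s \<in> S \<Longrightarrow> s \<le> y) \<Longrightarrow> x \<le> y"
  unfolding is_join_def by blast

lemma join_unique: "is_join S x \<Longrightarrow> is_join S y \<Longrightarrow> x = y"
  unfolding is_join_def by (meson antisym)

lemma join_empty: "is_join {} (bot::'a::orthomodular_lattice)"
  unfolding is_join_def by simp

lemma join_single: "is_join {a} a"
  unfolding is_join_def by simp

lemma join_union: "is_join S a \<Longrightarrow> is_join T b \<Longrightarrow> is_join (S \<union> T) (sup a b)"
  unfolding is_join_def by (auto intro: le_supI1 le_supI2)

lemma join_pair: "is_join {a,b} (sup a b)"
  using join_union[OF join_single join_single, of a b] by (simp add: insert_commute)

lemma join_in_sub2:
  fixes a b v :: "'a::orthomodular_lattice"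
  assumes "S \<subseteq> {a,b}" "is_join S v"
  shows "v \<in> {bot, a, b, sup a b}"
proof -
  have "S = {} \<or> S = {a} \<or> S = {b} \<or> S = {a,b}" using assms(1) by blast
  then show ?thesis
    using assms(2) join_unique join_empty join_single join_pair by blast
qed

lemma inB_gen: "inB X \<Longrightarrow> generated_by X (FV X)"
  unfolding inB_def generated_by_def FV_def by blast

lemma gen_inB: "generated_by X F \<Longrightarrow> inB X"
  unfolding inB_def by blast

lemma gen_FV: "generated_by X F \<Longrightarrow> FV X = F"
  unfolding generated_by_def FV_def by blast

lemma gen_BSA: "generated_by X F \<Longrightarrow> is_BSA X"
  unfolding generated_by_def by blast

lemma gen_fam_in: "generated_by X F \<Longrightarrow> f \<in> F \<Longrightarrow> f \<in> X"
  unfolding generated_by_def atoms_of_def by blast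

lemma gen_fam_nz: "generated_by X F \<Longrightarrow> f \<in> F \<Longrightarrow> f \<noteq> bot"
  unfolding generated_by_def by blast

lemma gen_fam_min: "generated_by X F \<Longrightarrow> f \<in> F \<Longrightarrow> x \<in> X \<Longrightarrow> x \<le> f \<Longrightarrow> x = bot \<or> x = f"
  unfolding generated_by_def atoms_of_def by blast

lemma gen_orth: "generated_by X F \<Longrightarrow> f \<in> F \<Longrightarrow> g \<in> F \<Longrightarrow> f \<noteq> g \<Longrightarrow> f \<le> -g"
  unfolding generated_by_def pairwise_orth_def orthogonal_def by blast

lemma gen_join: "generated_by X F \<Longrightarrow> v \<in> X \<Longrightarrow> \<exists>S\<subseteq>F. is_join S v"
  unfolding generated_by_def by blast

lemma SIDE:
  fixes f v :: "'a::orthomodular_lattice"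
  assumes g: "generated_by X F" and v: "v \<in> X" and f: "f \<in> F"
  shows "f \<le> v \<or> f \<le> -v"
proof -
  obtain S where S: "S \<subseteq> F" "is_join S v" using gen_join[OF g v] by blast
  show ?thesis
  proof (cases "f \<in> S")
    case True then show ?thesis using S join_le by blast
  next
    case False
    have "\<And>s. s \<in> S \<Longrightarrow> s \<le> -f"
    proof -
      fix s assume "s \<in> S"
      then have "f \<le> -s" using gen_orth[OF g f, of s] S False by blast
      then show "s \<le> -f" using compl_le_swap1 by blast
    qed
    then have "v \<le> -f" using join_least[OF S(2)] by blast
    then show ?thesis using compl_le_swap1 by blast
  qed
qed

lemma BSA_compl: "is_BSA X \<Longrightarrow> x \<in> X \<Longrightarrow> -x \<in> X"
  unfolding is_BSA_def by blast
lemma BSA_sup: "is_BSA X \<Longrightarrow> x \<in> X \<Longrightarrow> y \<in> X \<Longrightarrow> sup x y \<in> X"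
  unfolding is_BSA_def by blast
lemma BSA_inf: "is_BSA X \<Longrightarrow> x \<in> X \<Longrightarrow> y \<in> X \<Longrightarrow> inf x y \<in> X"
  unfolding is_BSA_def by blast
lemma BSA_bot: "is_BSA X \<Longrightarrow> bot \<in> X"
  unfolding is_BSA_def by blast
lemma BSA_top: "is_BSA X \<Longrightarrow> top \<in> X"
  unfolding is_BSA_def by blast
lemma BSA_distrib: "is_BSA X \<Longrightarrow> x \<in> X \<Longrightarrow> y \<in> X \<Longrightarrow> z \<in> X \<Longrightarrow> inf x (sup y z) = sup (inf x y) (inf x z)"
  unfolding is_BSA_def by blast

lemma BSA_comm:
  fixes x p :: "'a::orthomodular_lattice"
  shows "is_BSA X \<Longrightarrow> x \<in> X \<Longrightarrow> p \<in> X \<Longrightarrow> x = sup (inf x p) (inf x (-p))"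
  using BSA_distrib[of X x p "-p"] BSA_compl[of X p] by simp

lemma leading_unique: "leading X x \<Longrightarrow> leading X y \<Longrightarrow> x = y"
  unfolding leading_def by blast


lemma gen2_sub: "generated_by V {a,b} \<Longrightarrow> V \<subseteq> {bot,a,b,sup a b}"
  using gen_join join_in_sub2 by blast

lemma V_struct:
  fixes P :: "'a::orthomodular_lattice"
  assumes "generated_by V {P,-P}"
  shows "V = {bot, P, -P, top}"
proof
  show "V \<subseteq> {bot, P, -P, top}" using gen2_sub[OF assms] by simp
  show "{bot, P, -P, top} \<subseteq> V"
    using gen_BSA[OF assms] BSA_bot BSA_top gen_fam_in[OF assms] by blast
qed

lemma compl_facts:
  fixes Q :: "'a::orthomodular_lattice"
  assumes "Q \<noteq> bot" "-Q \<noteq> bot"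
  shows "Q \<noteq> top" "Q \<noteq> -Q" "\<not> (-Q \<le> Q)" "\<not> (Q \<le> -Q)" "\<not> (top \<le> Q)" "\<not> (top \<le> -Q)"
proof -
  show "Q \<noteq> top" using assms by auto
  show "Q \<noteq> -Q" using assms by (metis inf_compl_bot inf_idem)
  show "\<not> (-Q \<le> Q)" using assms by (metis compl_inf_bot inf.absorb1)
  show "\<not> (Q \<le> -Q)" using assms by (metis inf_compl_bot inf.absorb1)
  show "\<not> (top \<le> Q)" using assms(2) by (metis compl_top_eq top_le)
  show "\<not> (top \<le> -Q)" using assms by (metis compl_top_eq ortho_involution top_le)
qed

lemma two_BSA:
  fixes Q :: "'a::orthomodular_lattice"
  shows "is_BSA {bot, Q, -Q, top}"
  unfolding is_BSA_def
  by (auto simp: sup_commute inf_commute)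

lemma two_gen:
  fixes Q :: "'a::orthomodular_lattice"
  assumes "Q \<noteq> bot" "-Q \<noteq> bot"
  shows "generated_by {bot, Q, -Q, top} {Q,-Q}"
proof -
  note cf = compl_facts[OF assms]
  have at: "atoms_of {bot, Q, -Q, top} = {Q,-Q}"
    unfolding atoms_of_def using assms cf by auto
  have po: "pairwise_orth {Q, -Q}"
    unfolding pairwise_orth_def orthogonal_def by auto
  have jt: "is_join {Q,-Q} top" using join_pair[of Q "-Q"] by simp
  have el: "\<forall>v\<in>{bot, Q, -Q, top}. \<exists>S\<subseteq>{Q,-Q}. is_join S v"
  proof -
    have "\<exists>S\<subseteq>{Q,-Q}. is_join S bot" using join_empty by blast
    moreover have "\<exists>S\<subseteq>{Q,-Q}. is_join S Q" using join_single[of Q] by blast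
    moreover have "\<exists>S\<subseteq>{Q,-Q}. is_join S (-Q)" using join_single[of "-Q"] by blast
    moreover have "\<exists>S\<subseteq>{Q,-Q}. is_join S top" using jt by blast
    ultimately show ?thesis by blast
  qed
  show ?thesis unfolding generated_by_def
    using two_BSA[of Q] assms at po jt el by auto
qed

lemma fv_pair:
  fixes W :: "'a::orthomodular_lattice set"
  assumes "inB W" "dim2 W"
  shows "\<exists>Q. FV W = {Q, -Q}"
proof -
  have g: "generated_by W (FV W)" using inB_gen[OF assms(1)] .
  obtain a b where ab: "FV W = {a,b}" "a \<noteq> b" using assms(2) unfolding dim2_def by (meson card_2_iff)
  have o: "b \<le> -a" using gen_orth[OF g, of b a] ab by auto
  have "is_join (FV W) top" using g unfolding generated_by_def by blast
  then have "is_join {a,b} top" using ab by simp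
  then have s: "sup a b = top" using join_pair join_unique by blast
  have "sup b (inf (-b) (-a)) = -a" using om1[OF o] .
  moreover have "inf (-b) (-a) = bot" using s by (metis compl_sup compl_top_eq sup_commute)
  ultimately have "-a = b" by simp
  then show ?thesis using ab by blast
qed

section \<open>Restriction\<close>

definition Rs :: "'a::orthomodular_lattice set \<Rightarrow> 'a \<Rightarrow> 'a set" where
  "Rs X P = {w \<in> X. w \<le> P \<or> -P \<le> w}"

lemma R_sub: "Rs X P \<subseteq> X" unfolding Rs_def by blast

lemma R_gen:
  fixes P :: "'a::orthomodular_lattice"
  assumes g: "generated_by X F" and P: "P \<in> X" and at: "\<forall>f\<in>F. f \<le> P \<longrightarrow> is_atom f"
    and na: "\<not> is_atom (-P)" and nz: "-P \<noteq> bot"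
  shows "generated_by (Rs X P) ({f\<in>F. f \<le> P} \<union> {-P}) \<and> leading (Rs X P) (-P)"
proof -
  let ?R = "Rs X P" and ?G = "{f\<in>F. f \<le> P} \<union> {-P}"
  have B: "is_BSA X" using gen_BSA[OF g] .
  have nP: "-P \<in> X" using BSA_compl[OF B P] .
  have BR: "is_BSA ?R"
    unfolding is_BSA_def
  proof (intro conjI ballI)
    show "bot \<in> ?R" unfolding Rs_def using BSA_bot[OF B] by simp
    show "top \<in> ?R" unfolding Rs_def using BSA_top[OF B] by simp
  next
    fix x y assume x: "x \<in> ?R" and y: "y \<in> ?R"
    show "sup x y \<in> ?R" using x y BSA_sup[OF B] unfolding Rs_def
      by (auto intro: le_supI1 le_supI2)
    show "inf x y \<in> ?R" using x y BSA_inf[OF B] unfolding Rs_def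
      by (auto intro: le_infI1 le_infI2)
  next
    fix x assume x: "x \<in> ?R"
    show "-x \<in> ?R" using x BSA_compl[OF B] unfolding Rs_def
      by (auto intro: compl_le_swap2)
  next
    fix x y z assume "x \<in> ?R" "y \<in> ?R" "z \<in> ?R"
    then show "inf x (sup y z) = sup (inf x y) (inf x z)"
      using BSA_distrib[OF B] unfolding Rs_def by blast
  qed
  have FX: "F = atoms_of X" using g unfolding generated_by_def by blast
  have atR: "atoms_of ?R = ?G"
  proof
    show "?G \<subseteq> atoms_of ?R"
    proof
      fix a assume a: "a \<in> ?G"
      show "a \<in> atoms_of ?R"
      proof (cases "a = -P")
        case True
        have "\<And>x. x \<in> ?R \<Longrightarrow> x \<le> -P \<Longrightarrow> x = bot \<or> x = -P"
        proof -
          fix x assume "x \<in> ?R" "x \<le> -P"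
          then have "x \<le> P \<or> -P \<le> x" unfolding Rs_def by blast
          then show "x = bot \<or> x = -P"
            by (metis \<open>x \<le> -P\<close> antisym inf_compl_bot le_inf_iff bot_unique)
        qed
        then show ?thesis using True nz nP unfolding atoms_of_def Rs_def by auto
      next
        case False
        then have aF: "a \<in> F" "a \<le> P" using a by auto
        have "a \<in> ?R" using gen_fam_in[OF g aF(1)] aF(2) unfolding Rs_def by simp
        then show ?thesis using gen_fam_nz[OF g aF(1)] gen_fam_min[OF g aF(1)] R_sub
          unfolding atoms_of_def by blast
      qed
    qed
  next
    show "atoms_of ?R \<subseteq> ?G"
    proof
      fix a assume a: "a \<in> atoms_of ?R"
      then have aR: "a \<in> ?R" "a \<noteq> bot" and am: "\<And>x. x \<in> ?R \<Longrightarrow> x \<le> a \<Longrightarrow> x = bot \<or> x = a"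
        unfolding atoms_of_def by auto
      have "a \<le> P \<or> -P \<le> a" using aR unfolding Rs_def by blast
      then show "a \<in> ?G"
      proof
        assume aP: "a \<le> P"
        have "a \<in> atoms_of X"
          unfolding atoms_of_def
        proof (intro CollectI conjI ballI impI)
          show "a \<in> X" using aR unfolding Rs_def by blast
          show "a \<noteq> bot" by fact
          fix x assume "x \<in> X" "x \<le> a"
          then have "x \<in> ?R" using aP unfolding Rs_def by auto
          then show "x = bot \<or> x = a" using am \<open>x \<le> a\<close> by blast
        qed
        then show ?thesis using FX aP by blast
      next
        assume "-P \<le> a"
        moreover have "-P \<in> ?R" using nP unfolding Rs_def by simp
        ultimately have "-P = a" using am nz by blast
        then show ?thesis by blast
      qed
    qed
  qed
  have nzG: "\<forall>x\<in>?G. x \<noteq> bot" using gen_fam_nz[OF g] nz by auto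
  have poG: "pairwise_orth ?G"
    unfolding pairwise_orth_def orthogonal_def
  proof (intro ballI impI)
    fix x y assume x: "x \<in> ?G" and y: "y \<in> ?G" and xy: "x \<noteq> y"
    show "x \<le> -y"
    proof (cases "x = -P")
      case True
      then have "y \<le> P" using y xy by auto
      then show ?thesis using True by simp
    next
      case False
      then have xF: "x \<in> F" "x \<le> P" using x by auto
      show ?thesis
      proof (cases "y = -P")
        case True then show ?thesis using xF by simp
      next
        case False
        then have "y \<in> F" using y by auto
        then show ?thesis using gen_orth[OF g xF(1)] xy by blast
      qed
    qed
  qed
  have jG: "is_join ?G top"
    unfolding is_join_def
  proof (intro conjI allI impI ballI)
    fix s assume "s \<in> ?G" then show "s \<le> top" by simp
  next
    fix u assume u: "\<forall>s\<in>?G. s \<le> u"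
    obtain S where S: "S \<subseteq> F" "is_join S P" using gen_join[OF g P] by blast
    have "P \<le> u" using join_least[OF S(2)] join_le[OF S(2)] S(1) u by blast
    moreover have "-P \<le> u" using u by blast
    ultimately have "sup P (-P) \<le> u" by (rule le_supI)
    then show "top \<le> u" by (metis sup_compl_top)
  qed
  have elG: "\<forall>v\<in>?R. \<exists>S\<subseteq>?G. is_join S v"
  proof
    fix v assume v: "v \<in> ?R"
    then have vX: "v \<in> X" unfolding Rs_def by blast
    have "v \<le> P \<or> -P \<le> v" using v unfolding Rs_def by blast
    then show "\<exists>S\<subseteq>?G. is_join S v"
    proof
      assume vP: "v \<le> P"
      obtain S where S: "S \<subseteq> F" "is_join S v" using gen_join[OF g vX] by blast
      have "S \<subseteq> ?G" using S join_le[OF S(2)] vP by (auto intro: order_trans)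
      then show ?thesis using S by blast
    next
      assume Pv: "-P \<le> v"
      have "v = sup (inf v P) (inf v (-P))" using BSA_comm[OF B vX P] .
      also have "\<dots> = sup (inf v P) (-P)" using Pv by (simp add: inf_absorb2)
      finally have ve: "v = sup (inf v P) (-P)" .
      have ivX: "inf v P \<in> X" using BSA_inf[OF B vX P] .
      obtain S where S: "S \<subseteq> F" "is_join S (inf v P)" using gen_join[OF g ivX] by blast
      have "S \<subseteq> {f\<in>F. f \<le> P}" using S join_le[OF S(2)] by (auto intro: order_trans)
      then have "S \<union> {-P} \<subseteq> ?G" by blast
      moreover have "is_join (S \<union> {-P}) v" using join_union[OF S(2) join_single, of "-P"] ve by metis
      ultimately show ?thesis by blast
    qed
  qed
  have gR: "generated_by ?R ?G"
    unfolding generated_by_def using BR nzG poG jG atR elG by simp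
  have "leading ?R (-P)"
    unfolding leading_def
    using gen_inB[OF gR] gen_FV[OF gR] na at by auto
  then show ?thesis using gR by simp
qed


section \<open>Structure of minimal spiked extensions\<close>

lemma M_facts:
  assumes "A \<in> M_of V"
  shows "inB A" "spiked A" "V \<subseteq> A" "\<And>W'. inB W' \<Longrightarrow> spiked W' \<Longrightarrow> V \<subseteq> W' \<Longrightarrow> W' \<subseteq> A \<Longrightarrow> W' = A"
  using assms unfolding M_of_def S_of_def by auto

lemma minimal_R:
  fixes p :: "'a::orthomodular_lattice"
  assumes A: "A \<in> M_of V" and g: "generated_by A F" and p: "p \<in> A"
    and Vsub: "V \<subseteq> {bot, p, -p, top}" and at: "\<forall>f\<in>F. f \<le> p \<longrightarrow> is_atom f"
    and na: "\<not> is_atom (-p)" and nz: "-p \<noteq> bot"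
  shows "A = Rs A p \<and> leading A (-p)"
proof -
  have R: "generated_by (Rs A p) ({f\<in>F. f \<le> p} \<union> {-p}) \<and> leading (Rs A p) (-p)"
    using R_gen[OF g p at na nz] .
  have "V \<subseteq> Rs A p"
  proof
    fix v assume v: "v \<in> V"
    then have "v \<in> A" using M_facts(3)[OF A] by blast
    moreover have "v \<le> p \<or> -p \<le> v" using v Vsub by auto
    ultimately show "v \<in> Rs A p" unfolding Rs_def by blast
  qed
  moreover have "inB (Rs A p)" using R gen_inB by blast
  moreover have "spiked (Rs A p)" using R unfolding spiked_def by blast
  ultimately have "Rs A p = A" using M_facts(4)[OF A] R_sub by blast
  then show ?thesis using R by simp
qed

lemma M_struct:
  fixes P :: "'a::orthomodular_lattice"
  assumes V: "generated_by V {P,-P}" and naP: "\<not> is_atom P" and naQ: "\<not> is_atom (-P)"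
    and A: "A \<in> M_of V"
  shows "\<exists>l. (l = P \<or> l = -P) \<and> leading A l \<and> A = Rs A (-l)"
proof -
  have Vs: "V = {bot, P, -P, top}" using V_struct[OF V] .
  have gA: "generated_by A (FV A)" using inB_gen[OF M_facts(1)[OF A]] .
  have PA: "P \<in> A" "-P \<in> A" using Vs M_facts(3)[OF A] by auto
  have nzP: "P \<noteq> bot" "-P \<noteq> bot" using gen_fam_nz[OF V] by auto
  have Vs2: "V \<subseteq> {bot, -P, - (-P), top}" using Vs by auto
  have caseP: "\<exists>l. (l = P \<or> l = -P) \<and> leading A l \<and> A = Rs A (-l)"
    if h: "\<forall>f\<in>FV A. f \<le> P \<longrightarrow> is_atom f"
  proof -
    have "A = Rs A P \<and> leading A (-P)"
      using minimal_R[OF A gA PA(1) _ h naQ nzP(2)] Vs by simp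
    then show ?thesis by (intro exI[of _ "-P"]) simp
  qed
  have caseQ: "\<exists>l. (l = P \<or> l = -P) \<and> leading A l \<and> A = Rs A (-l)"
    if h: "\<forall>f\<in>FV A. f \<le> -P \<longrightarrow> is_atom f"
  proof -
    have "A = Rs A (-P) \<and> leading A (- (-P))"
      using minimal_R[OF A gA PA(2) Vs2 h] naP nzP(1) by simp
    then show ?thesis by (intro exI[of _ "P"]) simp
  qed
  have "spiked A" using M_facts(2)[OF A] .
  then consider "is_mBSA A" | x where "leading A x" unfolding spiked_def by blast
  then show ?thesis
  proof cases
    case 1
    then have "\<forall>f\<in>FV A. is_atom f" unfolding is_mBSA_def by blast
    then show ?thesis using caseP by blast
  next
    case 2
    then have x: "x \<in> FV A" "\<not> is_atom x" "\<forall>y\<in>FV A. y \<noteq> x \<longrightarrow> is_atom y"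
      unfolding leading_def by auto
    have xnz: "x \<noteq> bot" using gen_fam_nz[OF gA x(1)] .
    have "x \<le> P \<or> x \<le> -P" using SIDE[OF gA PA(1) x(1)] .
    then show ?thesis
    proof
      assume xP: "x \<le> P"
      have "\<forall>f\<in>FV A. f \<le> -P \<longrightarrow> is_atom f"
      proof (intro ballI impI)
        fix f assume f: "f \<in> FV A" "f \<le> -P"
        have "f \<noteq> x"
        proof
          assume "f = x"
          then have "x \<le> inf P (-P)" using xP f by (intro le_infI) simp_all
          then show False using xnz by (simp add: bot_unique)
        qed
        then show "is_atom f" using x f by blast
      qed
      then show ?thesis using caseQ by blast
    next
      assume xP: "x \<le> -P"
      have "\<forall>f\<in>FV A. f \<le> P \<longrightarrow> is_atom f"
      proof (intro ballI impI)
        fix f assume f: "f \<in> FV A" "f \<le> P"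
        have "f \<noteq> x"
        proof
          assume "f = x"
          then have "x \<le> inf P (-P)" using xP f by (intro le_infI) simp_all
          then show False using xnz by (simp add: bot_unique)
        qed
        then show "is_atom f" using x f by blast
      qed
      then show ?thesis using caseP by blast
    qed
  qed
qed


section \<open>Backward direction\<close>

lemma LEADSIDE:
  fixes P :: "'a::orthomodular_lattice"
  assumes lC: "leading C x" and AC: "A \<subseteq> C" and gA: "generated_by A FA" and PA: "P \<in> A"
    and at: "\<forall>f\<in>FA. f \<le> P \<longrightarrow> is_atom f"
  shows "x \<le> -P"
proof -
  have gC: "generated_by C (FV C)" using lC inB_gen unfolding leading_def by blast
  have x: "x \<in> FV C" "\<not> is_atom x" using lC unfolding leading_def by auto
  have xnz: "x \<noteq> bot" using gen_fam_nz[OF gC x(1)] .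
  have "x \<le> P \<or> x \<le> -P" using SIDE[OF gC _ x(1)] PA AC by blast
  moreover have "\<not> x \<le> P"
  proof
    assume xP: "x \<le> P"
    obtain S where S: "S \<subseteq> FA" "is_join S P" using gen_join[OF gA PA] by blast
    have "\<And>s. s \<in> S \<Longrightarrow> s \<le> -x"
    proof -
      fix s assume s: "s \<in> S"
      have sA: "s \<in> A" using gen_fam_in[OF gA] S s by blast
      have sat: "is_atom s" using at S s join_le[OF S(2) s] by blast
      have "x \<le> s \<or> x \<le> -s" using SIDE[OF gC _ x(1)] sA AC by blast
      moreover have "\<not> x \<le> s"
      proof
        assume "x \<le> s"
        then have "x = s" using sat xnz unfolding is_atom_def by blast
        then show False using sat x(2) by simp
      qed
      ultimately show "s \<le> -x" using compl_le_swap1 by blast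
    qed
    then have "P \<le> -x" using join_least[OF S(2)] by blast
    then have "x \<le> -P" using compl_le_swap1 by blast
    then have "x \<le> inf P (-P)" using xP by (intro le_infI)
    then show False using xnz by (simp add: bot_unique)
  qed
  ultimately show ?thesis by blast
qed

lemma atoms_side:
  fixes P :: "'a::orthomodular_lattice"
  assumes "leading A l" "l \<noteq> bot"
  shows "\<forall>f\<in>FV A. f \<le> -l \<longrightarrow> is_atom f"
proof (intro ballI impI)
  fix f assume f: "f \<in> FV A" "f \<le> -l"
  have "f \<noteq> l"
  proof
    assume "f = l"
    then have "l \<le> inf l (-l)" using f by (intro le_infI) simp_all
    then show False using assms(2) by (simp add: bot_unique)
  qed
  then show "is_atom f" using assms(1) f unfolding leading_def by blast
qed

lemma nonspiked_na:
  fixes P :: "'a::orthomodular_lattice"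
  assumes "inB V" "FV V = {P, -P}" "\<not> spiked V"
  shows "\<not> is_atom P" "\<not> is_atom (-P)"
proof -
  have "\<not> is_mBSA V" using assms(3) unfolding spiked_def by blast
  then have 1: "\<not> is_atom P \<or> \<not> is_atom (-P)" using assms(1,2) unfolding is_mBSA_def by auto
  have "\<not> leading V P" "\<not> leading V (-P)" using assms(3) unfolding spiked_def by blast+
  then have 2: "\<not> (\<not> is_atom P \<and> is_atom (-P))" "\<not> (\<not> is_atom (-P) \<and> is_atom P)"
    using assms(1,2) unfolding leading_def by auto
  from 1 2 show "\<not> is_atom P" "\<not> is_atom (-P)" by blast+
qed

lemma BACK:
  fixes P :: "'a::orthomodular_lattice"
  assumes V: "inB V" "FV V = {P, -P}" "\<not> spiked V"
    and A: "A \<in> M_of V" and B: "B \<in> M_of V"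
    and W: "inB W" "dim2 W" "\<not> spiked W" "W \<noteq> V"
    and C: "C \<in> M_of W" and D: "D \<in> M_of W" and AC: "A \<subseteq> C" and BD: "B \<subseteq> D"
  shows "\<exists>x. leading A x \<and> leading B x"
proof -
  have gV: "generated_by V {P,-P}" using inB_gen[OF V(1)] V(2) by simp
  note naV = nonspiked_na[OF V]
  obtain Q where Q: "FV W = {Q, -Q}" using fv_pair[OF W(1,2)] by blast
  have gW: "generated_by W {Q,-Q}" using inB_gen[OF W(1)] Q by simp
  note naW = nonspiked_na[OF W(1) Q W(3)]
  have nzP: "P \<noteq> bot" "-P \<noteq> bot" using gen_fam_nz[OF gV] by auto
  obtain la where la: "la = P \<or> la = -P" "leading A la" "A = Rs A (-la)"
    using M_struct[OF gV naV A] by blast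
  obtain lb where lb: "lb = P \<or> lb = -P" "leading B lb" "B = Rs B (-lb)"
    using M_struct[OF gV naV B] by blast
  obtain xc where xc: "xc = Q \<or> xc = -Q" "leading C xc"
    using M_struct[OF gW naW C] by blast
  obtain xd where xd: "xd = Q \<or> xd = -Q" "leading D xd"
    using M_struct[OF gW naW D] by blast
  have la_nz: "la \<noteq> bot" using la(1) nzP by auto
  have lb_nz: "lb \<noteq> bot" using lb(1) nzP by auto
  have gA: "generated_by A (FV A)" using inB_gen M_facts(1)[OF A] by blast
  have gB: "generated_by B (FV B)" using inB_gen M_facts(1)[OF B] by blast
  have PA: "-la \<in> A" using la(1) M_facts(3)[OF A] V_struct[OF gV] by auto
  have PB: "-lb \<in> B" using lb(1) M_facts(3)[OF B] V_struct[OF gV] by auto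
  have xcl: "xc \<le> la" using LEADSIDE[OF xc(2) AC gA PA atoms_side[OF la(2) la_nz]] by simp
  have xdl: "xd \<le> lb" using LEADSIDE[OF xd(2) BD gB PB atoms_side[OF lb(2) lb_nz]] by simp
  have gC: "generated_by C (FV C)" using xc(2) inB_gen unfolding leading_def by blast
  have xcnz: "xc \<noteq> bot" using gen_fam_nz[OF gC] xc(2) unfolding leading_def by blast
  show ?thesis
  proof (rule ccontr)
    assume ne: "\<not> ?thesis"
    then have "la \<noteq> lb" using la lb by blast
    then have lbe: "lb = -la" using la(1) lb(1) by auto
    show False
    proof (cases "xc = xd")
      case True
      then have "xc \<le> inf la (-la)" using xcl xdl lbe by (intro le_infI) simp_all
      then show False using xcnz by (simp add: bot_unique)
    next
      case False
      then have "xd = -xc" using xc(1) xd(1) by auto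
      then have "-xc \<le> -la" using xdl lbe by simp
      then have "la \<le> xc" by simp
      then have "xc = la" using xcl by simp
      then have "W = V" using V_struct[OF gW] V_struct[OF gV] xc(1) la(1) by auto
      then show False using W(4) by simp
    qed
  qed
qed


section \<open>Products\<close>

lemma COMPL:
  fixes P y z :: "'a::orthomodular_lattice"
  assumes "y \<le> P" "z \<le> -P"
  shows "- sup y z = sup (inf P (-y)) (inf (-P) (-z))"
proof -
  have "-P \<le> -y" using assms by simp
  then have y: "sup (-P) (inf P (-y)) = -y" using om1[of "-P" "-y"] by simp
  have "P \<le> -z" using assms compl_le_swap1 by blast
  then have z: "sup P (inf (-P) (-z)) = -z" using om1[of P "-z"] by simp
  have "- sup y z = inf (-y) (-z)" by simp
  also have "\<dots> = inf (sup (inf P (-y)) (-P)) (sup P (inf (-P) (-z)))"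
    using y z by (simp add: sup_commute)
  also have "\<dots> = sup (inf (inf P (-y)) P) (inf (-P) (inf (-P) (-z)))"
    by (rule INF[of _ P]) simp_all
  also have "\<dots> = sup (inf P (-y)) (inf (-P) (-z))"
    by (simp add: inf_aci)
  finally show ?thesis .
qed

definition Prod :: "'a::orthomodular_lattice set \<Rightarrow> 'a set \<Rightarrow> 'a set" where
  "Prod Y Z = {sup y z | y z. y \<in> Y \<and> z \<in> Z}"

lemma ProdI: "y \<in> Y \<Longrightarrow> z \<in> Z \<Longrightarrow> sup y z \<in> Prod Y Z"
  unfolding Prod_def by blast

lemma ProdE: "w \<in> Prod Y Z \<Longrightarrow> (\<And>y z. y \<in> Y \<Longrightarrow> z \<in> Z \<Longrightarrow> w = sup y z \<Longrightarrow> thesis) \<Longrightarrow> thesis"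
  unfolding Prod_def by blast

definition relBA :: "'a::orthomodular_lattice set \<Rightarrow> 'a \<Rightarrow> bool" where
  "relBA Y P \<longleftrightarrow> (\<forall>y\<in>Y. y \<le> P) \<and> bot \<in> Y \<and> P \<in> Y \<and>
     (\<forall>a\<in>Y. \<forall>b\<in>Y. sup a b \<in> Y \<and> inf a b \<in> Y) \<and> (\<forall>a\<in>Y. inf P (-a) \<in> Y) \<and>
     (\<forall>a\<in>Y. \<forall>b\<in>Y. \<forall>d\<in>Y. inf a (sup b d) = sup (inf a b) (inf a d))"

lemma PROD_BSA:
  fixes P :: "'a::orthomodular_lattice"
  assumes Y: "relBA Y P" and Z: "relBA Z (-P)"
  shows "is_BSA (Prod Y Z)"
  unfolding is_BSA_def
proof (intro conjI ballI)
  have Yl: "\<And>y. y \<in> Y \<Longrightarrow> y \<le> P" using Y unfolding relBA_def by blast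
  have Zl: "\<And>z. z \<in> Z \<Longrightarrow> z \<le> -P" using Z unfolding relBA_def by blast
  show "bot \<in> Prod Y Z" using ProdI[of bot Y bot Z] Y Z unfolding relBA_def by simp
  show "top \<in> Prod Y Z" using ProdI[of P Y "-P" Z] Y Z unfolding relBA_def by simp
  fix a b assume a: "a \<in> Prod Y Z" and b: "b \<in> Prod Y Z"
  obtain y1 z1 where 1: "y1 \<in> Y" "z1 \<in> Z" "a = sup y1 z1" using a by (rule ProdE)
  obtain y2 z2 where 2: "y2 \<in> Y" "z2 \<in> Z" "b = sup y2 z2" using b by (rule ProdE)
  have "sup a b = sup (sup y1 y2) (sup z1 z2)" using 1 2 by (simp add: sup_aci)
  moreover have "sup y1 y2 \<in> Y" "sup z1 z2 \<in> Z" using 1 2 Y Z unfolding relBA_def by blast+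
  ultimately show "sup a b \<in> Prod Y Z" using ProdI by metis
  have "inf a b = sup (inf y1 y2) (inf z1 z2)" using 1 2 INF[of y1 P z1 y2 z2] Yl Zl by simp
  moreover have "inf y1 y2 \<in> Y" "inf z1 z2 \<in> Z" using 1 2 Y Z unfolding relBA_def by blast+
  ultimately show "inf a b \<in> Prod Y Z" using ProdI by metis
next
  have Yl: "\<And>y. y \<in> Y \<Longrightarrow> y \<le> P" using Y unfolding relBA_def by blast
  have Zl: "\<And>z. z \<in> Z \<Longrightarrow> z \<le> -P" using Z unfolding relBA_def by blast
  fix a assume a: "a \<in> Prod Y Z"
  obtain y1 z1 where 1: "y1 \<in> Y" "z1 \<in> Z" "a = sup y1 z1" using a by (rule ProdE)
  have "-a = sup (inf P (-y1)) (inf (-P) (-z1))" using COMPL[of y1 P z1] 1 Yl Zl by simp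
  moreover have "inf P (-y1) \<in> Y" "inf (-P) (-z1) \<in> Z" using 1 Y Z unfolding relBA_def by blast+
  ultimately show "-a \<in> Prod Y Z" using ProdI by metis
next
  have Yl: "\<And>y. y \<in> Y \<Longrightarrow> y \<le> P" using Y unfolding relBA_def by blast
  have Zl: "\<And>z. z \<in> Z \<Longrightarrow> z \<le> -P" using Z unfolding relBA_def by blast
  fix a b d assume a: "a \<in> Prod Y Z" and b: "b \<in> Prod Y Z" and d: "d \<in> Prod Y Z"
  obtain y1 z1 where 1: "y1 \<in> Y" "z1 \<in> Z" "a = sup y1 z1" using a by (rule ProdE)
  obtain y2 z2 where 2: "y2 \<in> Y" "z2 \<in> Z" "b = sup y2 z2" using b by (rule ProdE)
  obtain y3 z3 where 3: "y3 \<in> Y" "z3 \<in> Z" "d = sup y3 z3" using d by (rule ProdE)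
  have "sup b d = sup (sup y2 y3) (sup z2 z3)" using 2 3 by (simp add: sup_aci)
  then have "inf a (sup b d) = sup (inf y1 (sup y2 y3)) (inf z1 (sup z2 z3))"
    using 1 2 3 INF[of y1 P z1 "sup y2 y3" "sup z2 z3"] Yl Zl by simp
  also have "\<dots> = sup (sup (inf y1 y2) (inf y1 y3)) (sup (inf z1 z2) (inf z1 z3))"
    using 1 2 3 Y Z unfolding relBA_def by simp
  also have "\<dots> = sup (sup (inf y1 y2) (inf z1 z2)) (sup (inf y1 y3) (inf z1 z3))"
    by (simp add: sup_aci)
  also have "\<dots> = sup (inf a b) (inf a d)"
    using 1 2 3 INF[of y1 P z1 y2 z2] INF[of y1 P z1 y3 z3] Yl Zl by simp
  finally show "inf a (sup b d) = sup (inf a b) (inf a d)" .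
qed


section \<open>Forward construction\<close>

locale fwd =
  fixes P c s1 s2 :: "'a::orthomodular_lattice" and V :: "'a set"
  assumes gV: "generated_by V {P,-P}" and naP: "\<not> is_atom P" and naQ: "\<not> is_atom (-P)"
    and atc: "is_atom c" and ats1: "is_atom s1" and ats2: "is_atom s2"
    and cP: "c \<le> -P" and s1P: "s1 \<le> -P" and s2P: "s2 \<le> -P"
    and s12: "s1 \<noteq> s2" and cs1: "c \<le> -s1" and cs2: "c \<le> -s2"
begin

definition "xx = inf (-P) (-c)"
definition "QQ = sup P c"
definition "WW = {bot, QQ, xx, top}"
definition "ZZ = {bot, c, xx, -P}"

lemma nz: "c \<noteq> bot" "s1 \<noteq> bot" "s2 \<noteq> bot" "P \<noteq> bot" "-P \<noteq> bot"
  using atc ats1 ats2 gen_fam_nz[OF gV] unfolding is_atom_def by auto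

lemma s_le_x: "s1 \<le> xx" "s2 \<le> xx"
  unfolding xx_def using s1P s2P cs1 cs2 compl_le_swap1 by (auto intro: le_infI)

lemma x_na: "\<not> is_atom xx"
proof
  assume "is_atom xx"
  then have "s1 = xx" "s2 = xx" using s_le_x nz unfolding is_atom_def by blast+
  then show False using s12 by simp
qed

lemma x_nz: "xx \<noteq> bot" using s_le_x nz by (metis bot_unique)

lemma x_le: "xx \<le> -P" "xx \<le> -c" unfolding xx_def by simp_all

lemma cx_sup: "sup c xx = -P"
  using om1[OF cP] unfolding xx_def by (simp add: inf_commute)

lemma cx_inf: "inf c xx = bot"
proof -
  have "inf c xx \<le> inf c (-c)" using x_le by (meson inf_mono order_refl)
  then show ?thesis by (simp add: bot_unique)
qed

lemma Qx: "-xx = QQ" "-QQ = xx" unfolding xx_def QQ_def by simp_all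

lemma nPx: "inf (-P) (-xx) = c"
  using om2[OF cP] unfolding Qx QQ_def by (simp add: sup_commute)

lemma c_ne_nP: "c \<noteq> -P" using naQ atc by auto

lemma c_not_le_P: "\<not> c \<le> P"
proof
  assume "c \<le> P"
  then have "c \<le> inf P (-P)" using cP by (intro le_infI)
  then show False using nz by (simp add: bot_unique)
qed

lemma c_not_le_x: "\<not> c \<le> xx"
proof
  assume "c \<le> xx"
  then have "c \<le> inf c (-c)" using x_le by (intro le_infI) (auto intro: order_trans)
  then show False using nz by (simp add: bot_unique)
qed

lemma x_ne_nP: "xx \<noteq> -P" using c_not_le_x cP by auto

lemma Q_na: "\<not> is_atom QQ"
proof
  assume a: "is_atom QQ"
  have "P \<le> QQ" unfolding QQ_def by simp
  then have "P = QQ" using a nz unfolding is_atom_def by blast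
  then have "c \<le> P" unfolding QQ_def by (metis sup.cobounded2)
  then show False using c_not_le_P by simp
qed

lemma Q_nz: "QQ \<noteq> bot" unfolding QQ_def using nz by (metis bot_unique sup.cobounded1)

lemma W_eq: "WW = {bot, QQ, -QQ, top}" unfolding WW_def Qx by simp

lemma gW: "generated_by WW {QQ, -QQ}"
  unfolding W_eq using two_gen Q_nz x_nz Qx by metis

lemma W_inB: "inB WW" using gen_inB[OF gW] .

lemma W_FV: "FV WW = {QQ, -QQ}" using gen_FV[OF gW] .

lemma W_dim2: "dim2 WW"
  unfolding dim2_def W_FV using compl_facts(2)[OF Q_nz] x_nz Qx by simp

lemma W_ns: "\<not> spiked WW"
proof
  assume "spiked WW"
  then consider "is_mBSA WW" | y where "leading WW y" unfolding spiked_def by blast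
  then show False
  proof cases
    case 1 then show False using Q_na unfolding is_mBSA_def W_FV by simp
  next
    case 2
    then have "y \<in> {QQ, -QQ}" "\<forall>z\<in>{QQ,-QQ}. z \<noteq> y \<longrightarrow> is_atom z"
      unfolding leading_def W_FV by auto
    then show False using Q_na x_na Qx compl_facts(2)[OF Q_nz] x_nz by auto
  qed
qed

lemma V_eq: "V = {bot, P, -P, top}" using V_struct[OF gV] .

lemma W_ne: "WW \<noteq> V"
proof
  assume e: "WW = V"
  have "xx \<in> WW" unfolding WW_def by simp
  then have "xx \<in> {bot, P, -P, top}" using e V_eq by simp
  moreover have "xx \<noteq> P"
  proof
    assume "xx = P"
    then have "P \<le> inf P (-P)" using x_le by (intro le_infI) simp_all
    then show False using nz by (simp add: bot_unique)
  qed
  moreover have "xx \<noteq> top"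
  proof
    assume "xx = top"
    then have "-P = top" using x_le by (simp add: top_unique)
    then show False using nz by (metis compl_top_eq ortho_involution)
  qed
  ultimately show False using x_nz x_ne_nP by simp
qed

end


context fwd
begin

lemma zfacts:
  "sup c xx = -P" "sup xx c = -P" "inf c xx = bot" "inf xx c = bot"
  "sup c (-P) = -P" "sup (-P) c = -P" "sup xx (-P) = -P" "sup (-P) xx = -P"
  "inf c (-P) = c" "inf (-P) c = c" "inf xx (-P) = xx" "inf (-P) xx = xx"
  "inf (-P) (-xx) = c" "inf (-P) (-c) = xx"
  using cx_sup cx_inf cP x_le nPx
  by (simp_all add: sup_commute inf_commute sup.absorb2 sup.absorb1 inf.absorb1 inf.absorb2 xx_def)

lemma Z_rel: "relBA ZZ (-P)"
  unfolding relBA_def ZZ_def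
  using zfacts cP x_le by (auto simp: sup_commute inf_commute)

lemma Y_rel: assumes "is_BSA A" "P \<in> A" shows "relBA {y\<in>A. y \<le> P} P"
  unfolding relBA_def using assms BSA_bot[OF assms(1)] BSA_sup[OF assms(1)] BSA_inf[OF assms(1)]
    BSA_compl[OF assms(1)] BSA_distrib[OF assms(1)]
  by (auto intro: le_supI le_infI1)

definition "Cn A = Prod {y\<in>A. y \<le> P} ZZ"

lemma CnI: "y \<in> A \<Longrightarrow> y \<le> P \<Longrightarrow> z \<in> ZZ \<Longrightarrow> sup y z \<in> Cn A"
  unfolding Cn_def using ProdI[of y "{y\<in>A. y \<le> P}" z ZZ] by simp

lemma CnE: "w \<in> Cn A \<Longrightarrow> (\<And>y z. y \<in> A \<Longrightarrow> y \<le> P \<Longrightarrow> z \<in> ZZ \<Longrightarrow> w = sup y z \<Longrightarrow> thesis) \<Longrightarrow> thesis"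
  unfolding Cn_def by (erule ProdE) auto

lemma Z_le: "z \<in> ZZ \<Longrightarrow> z \<le> -P" unfolding ZZ_def using cP x_le by auto

lemma Cn_low: assumes "w \<in> Cn A" "w \<le> -P" shows "w \<in> ZZ"
proof -
  obtain y z where yz: "y \<in> A" "y \<le> P" "z \<in> ZZ" "w = sup y z" using assms(1) by (rule CnE)
  have "y \<le> inf P (-P)" using yz assms(2) by (intro le_infI) (auto intro: order_trans)
  then have "y = bot" by (simp add: bot_unique)
  then show ?thesis using yz by simp
qed

lemma Cn_high: assumes "w \<in> Cn A" "w \<le> P" shows "w \<in> A"
proof -
  obtain y z where yz: "y \<in> A" "y \<le> P" "z \<in> ZZ" "w = sup y z" using assms(1) by (rule CnE)
  have "z \<le> inf P (-P)" using yz assms(2) Z_le by (intro le_infI) (auto intro: order_trans)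
  then have "z = bot" by (simp add: bot_unique)
  then show ?thesis using yz by simp
qed

lemma x_le_Q: "\<not> xx \<le> QQ"
proof
  assume "xx \<le> QQ"
  then have "xx \<le> inf QQ (-QQ)" using Qx by (intro le_infI) simp_all
  then show False using x_nz by (simp add: bot_unique)
qed

lemma C_main:
  assumes A: "A \<in> M_of V" and lA: "leading A (-P)"
  shows "Cn A \<in> M_of WW" "A \<subseteq> Cn A"
proof -
  have gA: "generated_by A (FV A)" using inB_gen M_facts(1)[OF A] by blast
  have B: "is_BSA A" using gen_BSA[OF gA] .
  have PA: "P \<in> A" "-P \<in> A" using V_eq M_facts(3)[OF A] by auto
  obtain l where l: "l = P \<or> l = -P" "leading A l" "A = Rs A (-l)"
    using M_struct[OF gV naP naQ A] by blast
  have "l = -P" using leading_unique[OF l(2) lA] .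
  then have AR: "A = Rs A P" using l(3) by simp
  have BC: "is_BSA (Cn A)" unfolding Cn_def using PROD_BSA[OF Y_rel[OF B PA(1)] Z_rel] .
  have AC: "A \<subseteq> Cn A"
  proof
    fix w assume w: "w \<in> A"
    then have "w \<le> P \<or> -P \<le> w" using AR unfolding Rs_def by blast
    then show "w \<in> Cn A"
    proof
      assume "w \<le> P"
      then show ?thesis using CnI[of w A bot] w unfolding ZZ_def by simp
    next
      assume "-P \<le> w"
      then have "w = sup (inf w P) (-P)" using BSA_comm[OF B w PA(1)] by (simp add: inf.absorb2)
      moreover have "inf w P \<in> A" using BSA_inf[OF B w PA(1)] .
      ultimately show ?thesis using CnI[of "inf w P" A "-P"] unfolding ZZ_def by (metis inf.cobounded2 insertCI)
    qed
  qed
  show "A \<subseteq> Cn A" by (fact AC)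
  have WC: "WW \<subseteq> Cn A"
  proof -
    have "bot \<in> Cn A" using CnI[of bot A bot] BSA_bot[OF B] unfolding ZZ_def by simp
    moreover have "QQ \<in> Cn A" using CnI[of P A c] PA unfolding ZZ_def QQ_def by simp
    moreover have "xx \<in> Cn A" using CnI[of bot A xx] BSA_bot[OF B] unfolding ZZ_def by simp
    moreover have "top \<in> Cn A" using CnI[of P A "-P"] PA unfolding ZZ_def by simp
    ultimately show ?thesis unfolding WW_def by blast
  qed
  let ?G = "{f\<in>FV A. f \<le> P} \<union> {c, xx}"
  have cC: "c \<in> Cn A" using CnI[of bot A c] BSA_bot[OF B] unfolding ZZ_def by simp
  have xC: "xx \<in> Cn A" using WC unfolding WW_def by blast
  have atC: "atoms_of (Cn A) = ?G"
  proof
    show "?G \<subseteq> atoms_of (Cn A)"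
    proof
      fix a assume a: "a \<in> ?G"
      consider "a \<in> FV A" "a \<le> P" | "a = c" | "a = xx" using a by blast
      then show "a \<in> atoms_of (Cn A)"
      proof cases
        case 1
        have "a \<in> Cn A" using AC gen_fam_in[OF gA 1(1)] by blast
        moreover have "\<And>w. w \<in> Cn A \<Longrightarrow> w \<le> a \<Longrightarrow> w = bot \<or> w = a"
          using Cn_high 1 gen_fam_min[OF gA 1(1)] by (meson order_trans)
        ultimately show ?thesis using gen_fam_nz[OF gA 1(1)] unfolding atoms_of_def by blast
      next
        case 2
        have "\<And>w. w \<in> Cn A \<Longrightarrow> w \<le> c \<Longrightarrow> w = bot \<or> w = c"
        proof -
          fix w assume w: "w \<in> Cn A" "w \<le> c"
          then have "w \<in> ZZ" using Cn_low cP order_trans by blast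
          moreover have "w \<noteq> xx"
          proof
            assume "w = xx"
            then have "xx \<le> inf c xx" using w by simp
            then show False using x_nz zfacts by (simp add: bot_unique)
          qed
          moreover have "w \<noteq> -P" using w cP c_ne_nP by auto
          ultimately show "w = bot \<or> w = c" unfolding ZZ_def by blast
        qed
        then show ?thesis using 2 cC nz unfolding atoms_of_def by auto
      next
        case 3
        have "\<And>w. w \<in> Cn A \<Longrightarrow> w \<le> xx \<Longrightarrow> w = bot \<or> w = xx"
        proof -
          fix w assume w: "w \<in> Cn A" "w \<le> xx"
          then have "w \<in> ZZ" using Cn_low x_le order_trans by blast
          moreover have "w \<noteq> c" using w c_not_le_x by auto
          moreover have "w \<noteq> -P" using w x_le x_ne_nP by auto
          ultimately show "w = bot \<or> w = xx" unfolding ZZ_def by blast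
        qed
        then show ?thesis using 3 xC x_nz unfolding atoms_of_def by auto
      qed
    qed
  next
    show "atoms_of (Cn A) \<subseteq> ?G"
    proof
      fix a assume a: "a \<in> atoms_of (Cn A)"
      then have aC: "a \<in> Cn A" "a \<noteq> bot" and am: "\<And>w. w \<in> Cn A \<Longrightarrow> w \<le> a \<Longrightarrow> w = bot \<or> w = a"
        unfolding atoms_of_def by auto
      obtain y z where yz: "y \<in> A" "y \<le> P" "z \<in> ZZ" "a = sup y z" using aC(1) by (rule CnE)
      show "a \<in> ?G"
      proof (cases "y = bot")
        case False
        have "y \<in> Cn A" using AC yz by blast
        then have ya: "y = a" using am[of y] yz False by simp
        have "a \<in> atoms_of A"
          unfolding atoms_of_def
        proof (intro CollectI conjI ballI impI)
          show "a \<in> A" using ya yz by simp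
          show "a \<noteq> bot" by fact
          fix w assume "w \<in> A" "w \<le> a"
          then show "w = bot \<or> w = a" using am AC by blast
        qed
        then show ?thesis using ya yz unfolding FV_def by blast
      next
        case True
        then have az: "a = z" using yz by simp
        have "z \<noteq> -P"
        proof
          assume "z = -P"
          then have "c = bot \<or> c = a" using am[OF cC] cP az by simp
          then show False using nz c_ne_nP az \<open>z = -P\<close> by simp
        qed
        then show ?thesis using az yz aC unfolding ZZ_def by auto
      qed
    qed
  qed
  have nzG: "\<forall>a\<in>?G. a \<noteq> bot" using gen_fam_nz[OF gA] nz x_nz by auto
  have poG: "pairwise_orth ?G"
    unfolding pairwise_orth_def orthogonal_def
  proof (intro ballI impI)
    fix a b assume a: "a \<in> ?G" and b: "b \<in> ?G" and ab: "a \<noteq> b"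
    have lowP: "\<And>f. f \<le> P \<Longrightarrow> f \<le> -c \<and> f \<le> -xx \<and> c \<le> -f \<and> xx \<le> -f"
    proof -
      fix f assume f: "f \<le> P"
      have "P \<le> -c" using cP compl_le_swap1 by blast
      moreover have "P \<le> -xx" using x_le compl_le_swap1 by blast
      moreover have "-P \<le> -f" using f by simp
      ultimately show "f \<le> -c \<and> f \<le> -xx \<and> c \<le> -f \<and> xx \<le> -f"
        using f cP x_le by (meson order_trans)
    qed
    have cx: "c \<le> -xx" "xx \<le> -c" using x_le compl_le_swap1 by blast+
    show "a \<le> -b"
      using a b ab lowP cx gen_orth[OF gA] by auto
  qed
  have jG: "is_join ?G top"
    unfolding is_join_def
  proof (intro conjI allI impI ballI)
    fix s assume "s \<in> ?G" then show "s \<le> top" by simp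
  next
    fix u assume u: "\<forall>s\<in>?G. s \<le> u"
    obtain S where S: "S \<subseteq> FV A" "is_join S P" using gen_join[OF gA PA(1)] by blast
    have "P \<le> u" using join_least[OF S(2)] join_le[OF S(2)] S(1) u by blast
    moreover have "-P \<le> u" using u zfacts(1) by (metis Un_iff insertCI le_sup_iff)
    ultimately have "sup P (-P) \<le> u" by (rule le_supI)
    then show "top \<le> u" by (metis sup_compl_top)
  qed
  have elG: "\<forall>v\<in>Cn A. \<exists>S\<subseteq>?G. is_join S v"
  proof
    fix v assume v: "v \<in> Cn A"
    obtain y z where yz: "y \<in> A" "y \<le> P" "z \<in> ZZ" "v = sup y z" using v by (rule CnE)
    obtain S where S: "S \<subseteq> FV A" "is_join S y" using gen_join[OF gA yz(1)] by blast
    have S2: "S \<subseteq> ?G" using S join_le[OF S(2)] yz(2) by (auto intro: order_trans)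
    have "\<exists>T\<subseteq>{c,xx}. is_join T z"
    proof -
      have "z = bot \<or> z = c \<or> z = xx \<or> z = -P" using yz(3) unfolding ZZ_def by blast
      moreover have "is_join {} bot" by (rule join_empty)
      moreover have "is_join {c} c" "is_join {xx} xx" by (rule join_single)+
      moreover have "is_join {c,xx} (-P)" using join_pair[of c xx] zfacts by simp
      ultimately show ?thesis by blast
    qed
    then obtain T where T: "T \<subseteq> {c,xx}" "is_join T z" by blast
    have "is_join (S \<union> T) v" using join_union[OF S(2) T(2)] yz by simp
    moreover have "S \<union> T \<subseteq> ?G" using S2 T by blast
    ultimately show "\<exists>S\<subseteq>?G. is_join S v" by blast
  qed
  have gC: "generated_by (Cn A) ?G"
    unfolding generated_by_def using BC nzG poG jG atC elG by simp
  have atA: "\<forall>f\<in>FV A. f \<le> P \<longrightarrow> is_atom f" using atoms_side[OF lA nz(5)] by simp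
  have lC: "leading (Cn A) xx"
    unfolding leading_def using gen_inB[OF gC] gen_FV[OF gC] x_na atA atc by auto
  have SC: "Cn A \<in> S_of WW"
    unfolding S_of_def spiked_def using gen_inB[OF gC] lC WC by blast
  have minC: "\<And>C'. C' \<in> S_of WW \<Longrightarrow> C' \<subseteq> Cn A \<Longrightarrow> C' = Cn A"
  proof -
    fix C' assume C': "C' \<in> S_of WW" "C' \<subseteq> Cn A"
    have iC: "inB C'" "spiked C'" "WW \<subseteq> C'" using C'(1) unfolding S_of_def by auto
    have gC': "generated_by C' (FV C')" using inB_gen[OF iC(1)] .
    have BC': "is_BSA C'" using gen_BSA[OF gC'] .
    have xC': "xx \<in> C'" "QQ \<in> C'" using iC(3) unfolding WW_def by auto
    obtain Sx where Sx: "Sx \<subseteq> FV C'" "is_join Sx xx" using gen_join[OF gC' xC'(1)] by blast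
    have "Sx \<noteq> {}" using Sx(2) join_empty join_unique x_nz by blast
    then obtain t where t: "t \<in> Sx" by blast
    have tx: "t = xx"
    proof -
      have tC: "t \<in> Cn A" using gen_fam_in[OF gC'] Sx t C'(2) by blast
      have tle: "t \<le> xx" using join_le[OF Sx(2) t] .
      then have "t \<in> ZZ" using Cn_low[OF tC] x_le order_trans by blast
      moreover have "t \<noteq> bot" using gen_fam_nz[OF gC'] Sx t by blast
      moreover have "t \<noteq> c" using tle c_not_le_x by auto
      moreover have "t \<noteq> -P" using tle x_le x_ne_nP by auto
      ultimately show ?thesis unfolding ZZ_def by blast
    qed
    have xF: "xx \<in> FV C'" using tx t Sx by blast
    have lead': "\<forall>f\<in>FV C'. f \<noteq> xx \<longrightarrow> is_atom f"
    proof -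
      consider "is_mBSA C'" | l' where "leading C' l'" using iC(2) unfolding spiked_def by blast
      then show ?thesis
      proof cases
        case 1 then show ?thesis using xF x_na unfolding is_mBSA_def by blast
      next
        case 2
        then have "l' = xx" using xF x_na unfolding leading_def by metis
        then show ?thesis using 2 unfolding leading_def by blast
      qed
    qed
    obtain SQ where SQ: "SQ \<subseteq> FV C'" "is_join SQ QQ" using gen_join[OF gC' xC'(2)] by blast
    have cF: "c \<in> SQ"
    proof (rule ccontr)
      assume ncs: "c \<notin> SQ"
      have "\<And>t. t \<in> SQ \<Longrightarrow> t \<le> P"
      proof -
        fix t assume t: "t \<in> SQ"
        have tC: "t \<in> Cn A" using gen_fam_in[OF gC'] SQ t C'(2) by blast
        have tle: "t \<le> QQ" using join_le[OF SQ(2) t] .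
        have "t \<noteq> xx" using tle x_le_Q by auto
        then have tat: "is_atom t" using lead' SQ t by blast
        obtain y z where yz: "y \<in> A" "y \<le> P" "z \<in> ZZ" "t = sup y z" using tC by (rule CnE)
        have zt: "z \<le> t" using yz by simp
        have "z \<noteq> xx" using zt tle x_le_Q by auto
        moreover have "z \<noteq> -P"
        proof
          assume "z = -P"
          then have "xx \<le> QQ" using zt tle x_le by (meson order_trans)
          then show False using x_le_Q by simp
        qed
        moreover have "z \<noteq> c"
        proof
          assume "z = c"
          then have "c = t" using zt tat nz unfolding is_atom_def by blast
          then show False using ncs t by simp
        qed
        ultimately have "z = bot" using yz unfolding ZZ_def by blast
        then show "t \<le> P" using yz by simp
      qed
      then have "QQ \<le> P" using join_least[OF SQ(2)] by blast
      then have "c \<le> P" unfolding QQ_def by simp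
      then show False using c_not_le_P by simp
    qed
    have cC': "c \<in> C'" using gen_fam_in[OF gC'] cF SQ by blast
    have "P \<le> -c" using cP compl_le_swap1 by blast
    then have "inf (-c) (sup P (- (-c))) = P" by (rule om2)
    then have PQ: "inf QQ (-c) = P" unfolding QQ_def by (simp add: inf_commute)
    have PC': "P \<in> C'" using BSA_inf[OF BC' xC'(2) BSA_compl[OF BC' cC']] PQ by simp
    have atP': "\<forall>f\<in>FV C'. f \<le> P \<longrightarrow> is_atom f"
    proof (intro ballI impI)
      fix f assume f: "f \<in> FV C'" "f \<le> P"
      have "f \<noteq> xx"
      proof
        assume "f = xx"
        then have "xx \<le> inf P (-P)" using f x_le by (intro le_infI) simp_all
        then show False using x_nz by (simp add: bot_unique)
      qed
      then show "is_atom f" using lead' f by blast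
    qed
    have R: "generated_by (Rs C' P) ({f\<in>FV C'. f \<le> P} \<union> {-P}) \<and> leading (Rs C' P) (-P)"
      using R_gen[OF gC' PC' atP' naQ nz(5)] .
    have VR: "V \<subseteq> Rs C' P"
    proof -
      have "{bot, P, -P, top} \<subseteq> C'" using PC' BSA_bot[OF BC'] BSA_top[OF BC'] BSA_compl[OF BC' PC'] by blast
      then show ?thesis using V_eq unfolding Rs_def by auto
    qed
    have RA: "Rs C' P \<subseteq> A"
    proof
      fix w assume w: "w \<in> Rs C' P"
      then have wC: "w \<in> Cn A" and wc: "w \<le> P \<or> -P \<le> w" using C'(2) unfolding Rs_def by auto
      obtain y z where yz: "y \<in> A" "y \<le> P" "z \<in> ZZ" "w = sup y z" using wC by (rule CnE)
      from wc show "w \<in> A"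
      proof
        assume "w \<le> P" then show ?thesis using Cn_high wC by blast
      next
        assume h: "-P \<le> w"
        have "inf w (-P) = z" using PROJ2[of y P z] yz Z_le by simp
        then have "z = -P" using h by (simp add: inf.absorb2)
        then show ?thesis using yz BSA_sup[OF B yz(1) PA(2)] by simp
      qed
    qed
    have "Rs C' P = A"
      using M_facts(4)[OF A] gen_inB R VR RA unfolding spiked_def by blast
    then have AC': "A \<subseteq> C'" using R_sub by blast
    have ZC': "ZZ \<subseteq> C'" unfolding ZZ_def using BSA_bot[OF BC'] cC' xC' BSA_compl[OF BC' PC'] by blast
    have "Cn A \<subseteq> C'"
    proof
      fix w assume "w \<in> Cn A"
      then obtain y z where yz: "y \<in> A" "y \<le> P" "z \<in> ZZ" "w = sup y z" by (rule CnE)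
      then show "w \<in> C'" using BSA_sup[OF BC'] AC' ZC' by blast
    qed
    then show "C' = Cn A" using C'(2) by blast
  qed
  show "Cn A \<in> M_of WW" unfolding M_of_def using SC minC by blast
qed

end


lemma three_elems:
  assumes "infinite S \<or> 3 \<le> card S"
  shows "\<exists>a b c. a\<in>S \<and> b\<in>S \<and> c\<in>S \<and> a\<noteq>b \<and> a\<noteq>c \<and> b\<noteq>c"
proof -
  obtain T where T: "T \<subseteq> S" "card T = 3"
  proof (cases "finite S")
    case True
    then have "3 \<le> card S" using assms by blast
    then show ?thesis using obtain_subset_with_card_n that by metis
  next
    case False
    then show ?thesis using infinite_arbitrarily_large that by metis
  qed
  then obtain a b c where "T = {a,b,c}" "a \<noteq> b" "b \<noteq> c" "a \<noteq> c" using card_3_iff by metis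
  then show ?thesis using T by blast
qed

lemma FWD:
  fixes P :: "'a::orthomodular_lattice"
  assumes gV: "generated_by V {P,-P}" and naP: "\<not> is_atom P" and naQ: "\<not> is_atom (-P)"
    and S3: "\<exists>S. (\<forall>a\<in>S. is_atom a) \<and> pairwise_orth S \<and> (infinite S \<or> 3 \<le> card S) \<and> is_join S (-P)"
    and A: "A \<in> M_of V" and B: "B \<in> M_of V" and lA: "leading A (-P)" and lB: "leading B (-P)"
  shows "\<exists>W C D. inB W \<and> dim2 W \<and> \<not> spiked W \<and> W \<noteq> V \<and>
       C \<in> M_of W \<and> D \<in> M_of W \<and> A \<subseteq> C \<and> B \<subseteq> D"
proof -
  obtain S where S: "\<forall>a\<in>S. is_atom a" "pairwise_orth S" "infinite S \<or> 3 \<le> card S" "is_join S (-P)"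
    using S3 by blast
  obtain c s1 s2 where cs: "c \<in> S" "s1 \<in> S" "s2 \<in> S" "c \<noteq> s1" "c \<noteq> s2" "s1 \<noteq> s2"
    using three_elems[OF S(3)] by blast
  interpret F: fwd P c s1 s2 V
  proof
    show "generated_by V {P,-P}" by fact
    show "\<not> is_atom P" by fact
    show "\<not> is_atom (-P)" by fact
    show "is_atom c" "is_atom s1" "is_atom s2" using S(1) cs by auto
    show "c \<le> -P" "s1 \<le> -P" "s2 \<le> -P" using join_le[OF S(4)] cs by auto
    show "s1 \<noteq> s2" by fact
    show "c \<le> -s1" "c \<le> -s2" using S(2) cs unfolding pairwise_orth_def orthogonal_def by auto
  qed
  show ?thesis
    using F.W_inB F.W_dim2 F.W_ns F.W_ne F.C_main[OF A lA] F.C_main[OF B lB] by blast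
qed

theorem lemma5p1:
  fixes V A B :: "'a::orthomodular_lattice set" and P :: 'a
  assumes "atomic_oml TYPE('a)"
    and "inB V" and "dim2 V" and "FV V = {P, - P}" and "\<not> spiked V"
    and "\<exists>S. (\<forall>a\<in>S. is_atom a) \<and> pairwise_orth S \<and> (infinite S \<or> 3 \<le> card S) \<and> is_join S P"
    and "\<exists>S. (\<forall>a\<in>S. is_atom a) \<and> pairwise_orth S \<and> (infinite S \<or> 3 \<le> card S) \<and> is_join S (- P)"
    and "A \<in> M_of V" and "B \<in> M_of V"
  shows "(\<exists>x. leading A x \<and> leading B x) \<longleftrightarrow>
    (\<exists>W C D. inB W \<and> dim2 W \<and> \<not> spiked W \<and> W \<noteq> V \<and>
       C \<in> M_of W \<and> D \<in> M_of W \<and> A \<subseteq> C \<and> B \<subseteq> D)"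
proof
  assume "\<exists>W C D. inB W \<and> dim2 W \<and> \<not> spiked W \<and> W \<noteq> V \<and>
       C \<in> M_of W \<and> D \<in> M_of W \<and> A \<subseteq> C \<and> B \<subseteq> D"
  then obtain W C D where "inB W" "dim2 W" "\<not> spiked W" "W \<noteq> V"
       "C \<in> M_of W" "D \<in> M_of W" "A \<subseteq> C" "B \<subseteq> D" by blast
  then show "\<exists>x. leading A x \<and> leading B x"
    using BACK[OF assms(2,4,5,8,9)] by blast
next
  assume "\<exists>x. leading A x \<and> leading B x"
  then obtain x where x: "leading A x" "leading B x" by blast
  have gV: "generated_by V {P,-P}" using inB_gen[OF assms(2)] assms(4) by simp
  note na = nonspiked_na[OF assms(2,4,5)]
  obtain l where l: "l = P \<or> l = -P" "leading A l"
    using M_struct[OF gV na assms(8)] by blast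
  have xl: "x = l" using leading_unique[OF x(1) l(2)] .
  from l(1) show "\<exists>W C D. inB W \<and> dim2 W \<and> \<not> spiked W \<and> W \<noteq> V \<and>
       C \<in> M_of W \<and> D \<in> M_of W \<and> A \<subseteq> C \<and> B \<subseteq> D"
  proof
    assume "l = -P"
    then show ?thesis using FWD[OF gV na assms(7,8,9)] x xl by simp
  next
    assume "l = P"
    have gV': "generated_by V {-P, -(-P)}" using gV by (simp add: insert_commute)
    have S': "\<exists>S. (\<forall>a\<in>S. is_atom a) \<and> pairwise_orth S \<and> (infinite S \<or> 3 \<le> card S) \<and> is_join S (-(-P))"
      using assms(6) by simp
    have "leading A (-(-P))" "leading B (-(-P))" using x xl \<open>l = P\<close> by simp_all
    then show ?thesis using FWD[OF gV' _ _ S' assms(8,9)] na by simp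
  qed
qed

end
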